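(* Let $q\ge2$, $n\ge1$ and $\boldsymbol{x}\neq\boldsymbol{y}\in\Sigma_q^n$. (1) $d_H(\mathcal{R}(\boldsymbol{x}),\mathcal{R}(\boldsymbol{y}))=3$ if and only if there exist $\boldsymbol{u},\boldsymbol{v}\in\Sigma_q^{\ge0}$, integers $t_1,t_2\ge1$ and symbols $a_1,b_1,a_2,b_2\in\Sigma_q$ with $a_1\ne b_1$, $a_2\ne b_2$, such that $\{\{\alpha_{t_1}(a_1b_1)[t_1],a_2\}\}\neq\{\{\alpha_{t_1}(b_1a_1)[t_1],b_2\}\}$ and $\boldsymbol{x}=(\boldsymbol{u},\boldsymbol{\alpha}_{t_1}(a_1b_1),\boldsymbol{\alpha}_{t_2}(a_2b_2),\boldsymbol{v})$, $\boldsymbol{y}=(\boldsymbol{u},\boldsymbol{\alpha}_{t_1}(b_1a_1),\boldsymbol{\alpha}_{t_2}(b_2a_2),\boldsymbol{v})$. (2) $d_H(\mathcal{R}(\boldsymbol{x}),\mathcal{R}(\boldsymbol{y}))=4$ if and only if one of the following holds: (A) there exist $\boldsymbol{u},\boldsymbol{w}\in\Sigma_q^{\ge0}$, $\boldsymbol{v}\in\Sigma_q^{\ge1}$, integers $t_1,t_2\ge1$ and symbols $a_1,b_1,a_2,b_2\in\Sigma_q$ with $a_1\ne b_1$, $a_2\ne b_2$, such that $\boldsymbol{x}=(\boldsymbol{u},\boldsymbol{\alpha}_{t_1}(a_1b_1),\boldsymbol{v},\boldsymbol{\alpha}_{t_2}(a_2b_2),\boldsymbol{w})$ and $\boldsymbol{y}=(\boldsymbol{u},\boldsymbol{\alpha}_{t_1}(b_1a_1),\boldsymbol{v},\boldsymbol{\alpha}_{t_2}(b_2a_2),\boldsymbol{w})$;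 (B) there exist $\boldsymbol{u},\boldsymbol{v}\in\Sigma_q^{\ge0}$, integers $t_1,t_2,t_3\ge1$ and symbols $a_1,b_1,a_2,b_2,a_3,b_3\in\Sigma_q$ with $a_i\ne b_i$ ($i=1,2,3$), such that $\{\{\alpha_{t_1}(a_1b_1)[t_1],a_2\}\}\neq\{\{\alpha_{t_1}(b_1a_1)[t_1],b_2\}\}$, $\{\{\alpha_{t_2}(a_2b_2)[t_2],a_3\}\}\neq\{\{\alpha_{t_2}(b_2a_2)[t_2],b_3\}\}$, and $\boldsymbol{x}=(\boldsymbol{u},\boldsymbol{\alpha}_{t_1}(a_1b_1),\boldsymbol{\alpha}_{t_2}(a_2b_2),\boldsymbol{\alpha}_{t_3}(a_3b_3),\boldsymbol{v})$, $\boldsymbol{y}=(\boldsymbol{u},\boldsymbol{\alpha}_{t_1}(b_1a_1),\boldsymbol{\alpha}_{t_2}(b_2a_2),\boldsymbol{\alpha}_{t_3}(b_3a_3),\boldsymbol{v})$.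
   Context: $\Sigma_q=\{0,\dots,q-1\}$; $\Sigma_q^{\ge0}$ (resp. $\Sigma_q^{\ge1}$) is the set of all finite (resp. nonempty finite) sequences over $\Sigma_q$; $(\cdot,\cdot)$ is concatenation. For $\boldsymbol{x}\in\Sigma_q^n$, $x[i]$ is its $i$-th entry, with $x[i]=0$ for $i\notin[1,n]$. $\mathcal{R}(\boldsymbol{x})$ is the vector of length $n+1$ whose $i$-th entry is the multiset $\{\{x[i-1],x[i]\}\}$. $d_H$ is Hamming distance. For distinct $a,b$ and $t\ge0$, $\boldsymbol{\alpha}_t(ab)$ is the alternating sequence $abab\cdots$ of length $t$ and $\alpha_t(ab)[t]$ its last entry; $\{\{\cdot\}\}$ denotes a multiset. *)

theory Defs
  imports Main "HOL-Library.Multiset"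
begin

definition seqs :: "nat \<Rightarrow> nat list set" where
  "seqs q = {xs. \<forall>c\<in>set xs. c < q}"

text \<open>1-indexed entry x[i], with x[i] = 0 for i outside [1,n].\<close>
definition entry :: "nat list \<Rightarrow> nat \<Rightarrow> nat" where
  "entry xs i = (if 1 \<le> i \<and> i \<le> length xs then xs ! (i - 1) else 0)"

definition Rvec :: "nat list \<Rightarrow> nat multiset list" where
  "Rvec xs = map (\<lambda>i. {# entry xs (i - 1), entry xs i #}) [1..<length xs + 2]"

definition hamming :: "'a list \<Rightarrow> 'a list \<Rightarrow> nat" where
  "hamming xs ys = card {i. i < length xs \<and> i < length ys \<and> xs ! i \<noteq> ys ! i}"

definition alt :: "nat \<Rightarrow> nat \<Rightarrow> nat \<Rightarrow> nat list" where
  "alt t a b = map (\<lambda>i. if even i then a else b) [0..<t]"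

definition alt_last :: "nat \<Rightarrow> nat \<Rightarrow> nat \<Rightarrow> nat" where
  "alt_last t a b = entry (alt t a b) t"

end

theory Submission
  imports Defs
begin


fun Rv :: "nat \<Rightarrow> nat list \<Rightarrow> nat multiset list" where
  "Rv p [] = [{#p,0#}]"
| "Rv p (a#xs) = {#p,a#} # Rv a xs"

lemma Rv_map2: "Rv p xs = map2 (\<lambda>a b. {#a,b#}) (p#xs) (xs@[0])"
  by (induction xs arbitrary: p) auto

lemma Rvec_Rv: "Rvec xs = Rv 0 xs"
proof -
  have "Rvec xs = map2 (\<lambda>a b. {#a,b#}) (0#xs) (xs@[0])"
  proof (rule nth_equalityI)
    show "length (Rvec xs) = length (map2 (\<lambda>a b. {#a,b#}) (0#xs) (xs@[0]))"
      by (simp add: Rvec_def del: upt_Suc)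
  next
    fix k assume k: "k < length (Rvec xs)"
    hence kl: "k \<le> length xs" by (simp add: Rvec_def del: upt_Suc)
    have e1: "entry xs k = (0#xs) ! k"
      using kl by (cases k) (auto simp: entry_def)
    have e2: "entry xs (Suc k) = (xs@[0]) ! k"
      using kl by (auto simp: entry_def nth_append)
    show "Rvec xs ! k = map2 (\<lambda>a b. {#a,b#}) (0#xs) (xs@[0]) ! k"
      using kl e1 e2 by (simp add: Rvec_def nth_append del: upt_Suc)
  qed
  thus ?thesis by (simp add: Rv_map2)
qed

lemma hamming_Cons: "hamming (a#xs) (b#ys) = (if a = b then 0 else 1) + hamming xs ys"
proof -
  let ?S = "{i. i < length xs \<and> i < length ys \<and> xs!i \<noteq> ys!i}"
  have eq: "{i. i < length (a#xs) \<and> i < length (b#ys) \<and> (a#xs)!i \<noteq> (b#ys)!i}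
        = (if a = b then {} else {0}) \<union> Suc ` ?S"
    apply (rule set_eqI)
    subgoal for i by (cases i) auto
    done
  have fin: "finite ?S" by simp
  show ?thesis unfolding hamming_def eq
    using fin by (auto simp: card_image)
qed

lemma hamming_Nil: "hamming [] [] = 0" by (simp add: hamming_def)

definition H :: "nat \<Rightarrow> nat \<Rightarrow> nat list \<Rightarrow> nat list \<Rightarrow> nat" where
  "H p p' xs ys = hamming (Rv p xs) (Rv p' ys)"

lemma H_Nil[simp]: "H p p' [] [] = (if p = p' then 0 else 1)"
  by (auto simp: H_def hamming_Cons hamming_Nil)

lemma mset2_eq: "({#p,a#} = {#p',b#}) = (p = p' \<and> a = b \<or> p = b \<and> a = p')"
  by (auto simp: add_eq_conv_ex)

lemma H_Cons[simp]: "H p p' (a#xs) (b#ys) = (if {#p,a#} = {#p',b#} then 0 else 1) + H a b xs ys"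
  by (simp add: H_def hamming_Cons)


lemma H_same: "H p p xs xs = 0"
  by (induction xs arbitrary: p) auto

lemma H_app_same: "H p p (u@xs) (u@ys) = H (last (p#u)) (last (p#u)) xs ys"
  by (induction u arbitrary: p) auto

lemma H_diff_pos: "a \<noteq> b \<Longrightarrow> length xs = length ys \<Longrightarrow> H a b xs ys \<ge> 1"
proof (induction xs arbitrary: a b ys)
  case Nil thus ?case by simp
next
  case (Cons c xs)
  then obtain d ys' where ys: "ys = d # ys'" by (cases ys) auto
  show ?case
  proof (cases "{#a,c#} = {#b,d#}")
    case True
    hence "c \<noteq> d" using Cons.prems by (auto simp: mset2_eq)
    hence "H c d xs ys' \<ge> 1" using Cons ys by auto
    thus ?thesis using ys by simp
  qed (use ys in simp)
qed

lemma H_eq_ge2: "length xs = length ys \<Longrightarrow> xs \<noteq> ys \<Longrightarrow> H p p xs ys \<ge> 2"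
proof (induction xs arbitrary: ys p)
  case Nil thus ?case by simp
next
  case (Cons a xs)
  then obtain b ys' where ys: "ys = b # ys'" by (cases ys) auto
  show ?case
  proof (cases "a = b")
    case True thus ?thesis using Cons ys by auto
  next
    case False
    have "H a b xs ys' \<ge> 1" using H_diff_pos[OF False] Cons ys by auto
    thus ?thesis using False ys by (auto simp: mset2_eq)
  qed
qed

lemma H_eq_cases: "length xs = length ys \<Longrightarrow> H p p xs ys = 0 \<and> xs = ys \<or> H p p xs ys \<ge> 2"
  using H_eq_ge2[of xs ys p] H_same[of p xs] by auto

lemma alt_Suc: "alt (Suc t) a b = a # alt t b a"
  unfolding alt_def by (simp add: map_upt_Suc del: upt_Suc)

lemma alt_0[simp]: "alt 0 a b = []" by (simp add: alt_def)

lemma length_alt[simp]: "length (alt t a b) = t" by (simp add: alt_def)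

lemma set_alt: "set (alt t a b) \<subseteq> {a,b}" by (auto simp: alt_def)

lemma alt_last_eq: "alt_last (Suc t) a b = last (a # alt t b a)"
proof -
  have ne: "alt (Suc t) a b \<noteq> []" by (simp add: alt_Suc)
  have "alt_last (Suc t) a b = alt (Suc t) a b ! t" by (simp add: alt_last_def entry_def)
  also have "\<dots> = last (alt (Suc t) a b)" using last_conv_nth[OF ne] by simp
  finally show ?thesis by (simp add: alt_Suc)
qed

lemma last_alt_swap: "a \<noteq> b \<Longrightarrow> last (a # alt t b a) \<noteq> last (b # alt t a b)"
  by (induction t arbitrary: a b) (auto simp: alt_Suc)

lemma H_alt: "H a b (alt t b a @ xs) (alt t a b @ ys) = H (last (a # alt t b a)) (last (b # alt t a b)) xs ys"
  by (induction t arbitrary: a b) (auto simp: alt_Suc mset2_eq)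

lemma H_tail_conv: "a \<noteq> b \<Longrightarrow> H a b (alt t b a @ v) (alt t a b @ v) = 1"
  using last_alt_swap[of a b t]
  using H_alt[of a b t "[]" "[]"]
  by (cases v) (auto simp: H_alt mset2_eq H_same)

lemma D: "a \<noteq> b \<Longrightarrow> length r = length r' \<Longrightarrow> \<exists>t s s'. r = alt t b a @ s \<and> r' = alt t a b @ s' \<and>
   (s = [] \<and> s' = [] \<or> (\<exists>c c' w w'. s = c#w \<and> s' = c'#w' \<and> {#last (a # alt t b a), c#} \<noteq> {#last (b # alt t a b), c'#}))"
proof (induction r arbitrary: a b r')
  case Nil thus ?case by (intro exI[of _ 0]) auto
next
  case (Cons c w)
  then obtain c' w' where r': "r' = c' # w'" by (cases r') auto
  show ?case
  proof (cases "{#a,c#} = {#b,c'#}")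
    case False thus ?thesis using r' by (intro exI[of _ 0]) auto
  next
    case True
    hence cc: "c = b" "c' = a" using Cons.prems by (auto simp: mset2_eq)
    obtain t s s' where ts: "w = alt t a b @ s" "w' = alt t b a @ s'"
      "(s = [] \<and> s' = [] \<or> (\<exists>c c' w w'. s = c#w \<and> s' = c'#w' \<and> {#last (b # alt t a b), c#} \<noteq> {#last (a # alt t b a), c'#}))"
      using Cons.IH[of b a w'] Cons.prems r' by auto
    show ?thesis
      apply (rule exI[of _ "Suc t"], rule exI[of _ s], rule exI[of _ s'])
      using ts cc r' by (auto simp: alt_Suc)
  qed
qed

lemma step: "a \<noteq> b \<Longrightarrow> length r = length r' \<Longrightarrow> \<exists>t s s'. r = alt t b a @ s \<and> r' = alt t a b @ s' \<and>
   (s = [] \<and> s' = [] \<and> H a b r r' = 1 \<or>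
    (\<exists>g w w'. s = g#w \<and> s' = g#w' \<and> H a b r r' = 1 + H g g w w') \<or>
    (\<exists>a2 b2 w w'. s = a2#w \<and> s' = b2#w' \<and> a2 \<noteq> b2 \<and> {#last (a # alt t b a), a2#} \<noteq> {#last (b # alt t a b), b2#}
        \<and> H a b r r' = 1 + H a2 b2 w w'))"
proof -
  assume ab: "a \<noteq> b" and l: "length r = length r'"
  from D[OF ab l] obtain t s s' where ts: "r = alt t b a @ s" "r' = alt t a b @ s'"
    "(s = [] \<and> s' = [] \<or> (\<exists>c c' w w'. s = c#w \<and> s' = c'#w' \<and> {#last (a # alt t b a), c#} \<noteq> {#last (b # alt t a b), c'#}))"
    by blast
  define p where "p = last (a # alt t b a)"
  define p' where "p' = last (b # alt t a b)"
  have HH: "H a b r r' = H p p' s s'"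
    using ts H_alt unfolding p_def p'_def by simp
  have sw: "p \<noteq> p'" using last_alt_swap[OF ab] unfolding p_def p'_def .
  have "s = [] \<and> s' = [] \<and> H a b r r' = 1 \<or>
    (\<exists>g w w'. s = g#w \<and> s' = g#w' \<and> H a b r r' = 1 + H g g w w') \<or>
    (\<exists>a2 b2 w w'. s = a2#w \<and> s' = b2#w' \<and> a2 \<noteq> b2 \<and> {#p, a2#} \<noteq> {#p', b2#}
        \<and> H a b r r' = 1 + H a2 b2 w w')"
  proof (cases "s = []")
    case True thus ?thesis using ts(3) HH sw unfolding p_def[symmetric] p'_def[symmetric] by simp
  next
    case False
    then obtain c c' w w' where cw: "s = c#w" "s' = c'#w'" "{#p, c#} \<noteq> {#p', c'#}"
      using ts(3) unfolding p_def[symmetric] p'_def[symmetric] by auto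
    have H1: "H a b r r' = 1 + H c c' w w'" using HH cw by simp
    show ?thesis
    proof (cases "c = c'")
      case True thus ?thesis using cw H1 by auto
    next
      case False thus ?thesis using cw H1 by blast
    qed
  qed
  thus ?thesis using ts(1,2) unfolding p_def p'_def by blast
qed


lemma len_split: "length r = length r' \<Longrightarrow> r = alt t b a @ s \<Longrightarrow> r' = alt t a b @ s' \<Longrightarrow> length s = length s'"
  by simp

lemma tail: "a \<noteq> b \<Longrightarrow> length r = length r' \<Longrightarrow> H a b r r' = 1 \<Longrightarrow> \<exists>t v. r = alt t b a @ v \<and> r' = alt t a b @ v"
proof -
  assume ab: "a \<noteq> b" and l: "length r = length r'" and h: "H a b r r' = 1"
  from step[OF ab l] obtain t s s' where ts: "r = alt t b a @ s" "r' = alt t a b @ s'" and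
   c: "(s = [] \<and> s' = [] \<and> H a b r r' = 1 \<or>
    (\<exists>g w w'. s = g#w \<and> s' = g#w' \<and> H a b r r' = 1 + H g g w w') \<or>
    (\<exists>a2 b2 w w'. s = a2#w \<and> s' = b2#w' \<and> a2 \<noteq> b2 \<and> {#last (a # alt t b a), a2#} \<noteq> {#last (b # alt t a b), b2#}
        \<and> H a b r r' = 1 + H a2 b2 w w'))" by blast
  have ls: "length s = length s'" using l ts by simp
  from c show ?thesis
  proof (elim disjE exE conjE)
    assume "s = []" "s' = []" thus ?thesis using ts by blast
  next
    fix g w w' assume g: "s = g#w" "s' = g#w'" "H a b r r' = 1 + H g g w w'"
    hence "H g g w w' = 0" using h by simp
    moreover have "length w = length w'" using ls g by simp
    ultimately have "w = w'" using H_eq_cases[of w w' g] by auto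
    thus ?thesis using ts g by blast
  next
    fix a2 b2 w w' assume g: "s = a2#w" "s' = b2#w'" "a2 \<noteq> b2" "H a b r r' = 1 + H a2 b2 w w'"
    have "length w = length w'" using ls g by simp
    hence "H a2 b2 w w' \<ge> 1" using H_diff_pos g by blast
    thus ?thesis using g h by simp
  qed
qed

lemma prefix: "length xs = length ys \<Longrightarrow> xs \<noteq> ys \<Longrightarrow> \<exists>u a b r r'. xs = u @ a # r \<and> ys = u @ b # r' \<and> a \<noteq> b \<and> length r = length r'"
proof (induction xs arbitrary: ys)
  case Nil thus ?case by simp
next
  case (Cons c xs)
  then obtain d ys' where ys: "ys = d # ys'" by (cases ys) auto
  show ?case
  proof (cases "c = d")
    case True
    have "length xs = length ys'" "xs \<noteq> ys'" using Cons.prems ys True by auto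
    then obtain u a b r r' where "xs = u @ a # r \<and> ys' = u @ b # r' \<and> a \<noteq> b \<and> length r = length r'"
      using Cons.IH by blast
    thus ?thesis using ys True by (intro exI[of _ "c#u"]) auto
  next
    case False thus ?thesis using ys Cons.prems by (intro exI[of _ "[]"]) auto
  qed
qed

lemma mset_neq_same: "a \<noteq> b \<Longrightarrow> {#p, a#} \<noteq> {#p, b#}"
  by (auto simp: mset2_eq)

lemma back3:
  assumes "a1 \<noteq> b1" "a2 \<noteq> b2" "{# alt_last t1 a1 b1, a2 #} \<noteq> {# alt_last t1 b1 a1, b2 #}" "t1 \<ge> 1" "t2 \<ge> 1"
  shows "H p p (u @ alt t1 a1 b1 @ alt t2 a2 b2 @ v) (u @ alt t1 b1 a1 @ alt t2 b2 a2 @ v) = 3"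
proof -
  obtain s1 s2 where t: "t1 = Suc s1" "t2 = Suc s2" using assms(4,5) by (metis Suc_le_D One_nat_def)
  define c where "c = last (a1 # alt s1 b1 a1)"
  define d where "d = last (b1 # alt s1 a1 b1)"
  have cd: "{#c, a2#} \<noteq> {#d, b2#}" using assms(3) t by (simp add: alt_last_eq c_def d_def)
  let ?p = "last (p#u)"
  have "H p p (u @ alt t1 a1 b1 @ alt t2 a2 b2 @ v) (u @ alt t1 b1 a1 @ alt t2 b2 a2 @ v)
     = H ?p ?p (alt t1 a1 b1 @ alt t2 a2 b2 @ v) (alt t1 b1 a1 @ alt t2 b2 a2 @ v)" by (rule H_app_same)
  also have "\<dots> = 1 + H a1 b1 (alt s1 b1 a1 @ alt t2 a2 b2 @ v) (alt s1 a1 b1 @ alt t2 b2 a2 @ v)"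
    using t assms(1) by (simp add: alt_Suc mset_neq_same)
  also have "H a1 b1 (alt s1 b1 a1 @ alt t2 a2 b2 @ v) (alt s1 a1 b1 @ alt t2 b2 a2 @ v)
     = H c d (alt t2 a2 b2 @ v) (alt t2 b2 a2 @ v)" unfolding c_def d_def by (rule H_alt)
  also have "\<dots> = 1 + H a2 b2 (alt s2 b2 a2 @ v) (alt s2 a2 b2 @ v)"
    using t cd by (simp add: alt_Suc)
  also have "H a2 b2 (alt s2 b2 a2 @ v) (alt s2 a2 b2 @ v) = 1" using H_tail_conv assms(2) by blast
  finally show ?thesis by simp
qed

lemma back4A:
  assumes "a1 \<noteq> b1" "a2 \<noteq> b2" "v \<noteq> []" "t1 \<ge> 1" "t2 \<ge> 1"
  shows "H p p (u @ alt t1 a1 b1 @ v @ alt t2 a2 b2 @ w) (u @ alt t1 b1 a1 @ v @ alt t2 b2 a2 @ w) = 4"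
proof -
  obtain s1 s2 where t: "t1 = Suc s1" "t2 = Suc s2" using assms(4,5) by (metis Suc_le_D One_nat_def)
  obtain g v' where v: "v = g # v'" using assms(3) by (cases v) auto
  define c where "c = last (a1 # alt s1 b1 a1)"
  define d where "d = last (b1 # alt s1 a1 b1)"
  have cd: "c \<noteq> d" using last_alt_swap[OF assms(1)] by (simp add: c_def d_def)
  hence cd': "{#c, g#} \<noteq> {#d, g#}" by (auto simp: mset2_eq)
  let ?p = "last (p#u)"
  let ?h = "last (g#v')"
  have "H p p (u @ alt t1 a1 b1 @ v @ alt t2 a2 b2 @ w) (u @ alt t1 b1 a1 @ v @ alt t2 b2 a2 @ w)
     = H ?p ?p (alt t1 a1 b1 @ v @ alt t2 a2 b2 @ w) (alt t1 b1 a1 @ v @ alt t2 b2 a2 @ w)" by (rule H_app_same)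
  also have "\<dots> = 1 + H a1 b1 (alt s1 b1 a1 @ v @ alt t2 a2 b2 @ w) (alt s1 a1 b1 @ v @ alt t2 b2 a2 @ w)"
    using t assms(1) by (simp add: alt_Suc mset_neq_same)
  also have "H a1 b1 (alt s1 b1 a1 @ v @ alt t2 a2 b2 @ w) (alt s1 a1 b1 @ v @ alt t2 b2 a2 @ w)
     = H c d (v @ alt t2 a2 b2 @ w) (v @ alt t2 b2 a2 @ w)" unfolding c_def d_def by (rule H_alt)
  also have "\<dots> = 1 + H g g (v' @ alt t2 a2 b2 @ w) (v' @ alt t2 b2 a2 @ w)"
    using v cd' by simp
  also have "H g g (v' @ alt t2 a2 b2 @ w) (v' @ alt t2 b2 a2 @ w) = H ?h ?h (alt t2 a2 b2 @ w) (alt t2 b2 a2 @ w)"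
    by (rule H_app_same)
  also have "\<dots> = 1 + H a2 b2 (alt s2 b2 a2 @ w) (alt s2 a2 b2 @ w)"
    using t assms(2) by (simp add: alt_Suc mset_neq_same)
  also have "H a2 b2 (alt s2 b2 a2 @ w) (alt s2 a2 b2 @ w) = 1" using H_tail_conv assms(2) by blast
  finally show ?thesis by simp
qed

lemma back4B:
  assumes "a1 \<noteq> b1" "a2 \<noteq> b2" "a3 \<noteq> b3" "{# alt_last t1 a1 b1, a2 #} \<noteq> {# alt_last t1 b1 a1, b2 #}"
    "{# alt_last t2 a2 b2, a3 #} \<noteq> {# alt_last t2 b2 a2, b3 #}" "t1 \<ge> 1" "t2 \<ge> 1" "t3 \<ge> 1"
  shows "H p p (u @ alt t1 a1 b1 @ alt t2 a2 b2 @ alt t3 a3 b3 @ v) (u @ alt t1 b1 a1 @ alt t2 b2 a2 @ alt t3 b3 a3 @ v) = 4"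
proof -
  obtain s1 s2 s3 where t: "t1 = Suc s1" "t2 = Suc s2" "t3 = Suc s3" using assms(6,7,8) by (metis Suc_le_D One_nat_def)
  define c where "c = last (a1 # alt s1 b1 a1)"
  define d where "d = last (b1 # alt s1 a1 b1)"
  define c2 where "c2 = last (a2 # alt s2 b2 a2)"
  define d2 where "d2 = last (b2 # alt s2 a2 b2)"
  have cd: "{#c, a2#} \<noteq> {#d, b2#}" using assms(4) t by (simp add: alt_last_eq c_def d_def)
  have cd2: "{#c2, a3#} \<noteq> {#d2, b3#}" using assms(5) t by (simp add: alt_last_eq c2_def d2_def)
  let ?p = "last (p#u)"
  have "H p p (u @ alt t1 a1 b1 @ alt t2 a2 b2 @ alt t3 a3 b3 @ v) (u @ alt t1 b1 a1 @ alt t2 b2 a2 @ alt t3 b3 a3 @ v)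
     = H ?p ?p (alt t1 a1 b1 @ alt t2 a2 b2 @ alt t3 a3 b3 @ v) (alt t1 b1 a1 @ alt t2 b2 a2 @ alt t3 b3 a3 @ v)" by (rule H_app_same)
  also have "\<dots> = 1 + H a1 b1 (alt s1 b1 a1 @ alt t2 a2 b2 @ alt t3 a3 b3 @ v) (alt s1 a1 b1 @ alt t2 b2 a2 @ alt t3 b3 a3 @ v)"
    using t assms(1) by (simp add: alt_Suc mset_neq_same)
  also have "H a1 b1 (alt s1 b1 a1 @ alt t2 a2 b2 @ alt t3 a3 b3 @ v) (alt s1 a1 b1 @ alt t2 b2 a2 @ alt t3 b3 a3 @ v)
     = H c d (alt t2 a2 b2 @ alt t3 a3 b3 @ v) (alt t2 b2 a2 @ alt t3 b3 a3 @ v)" unfolding c_def d_def by (rule H_alt)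
  also have "\<dots> = 1 + H a2 b2 (alt s2 b2 a2 @ alt t3 a3 b3 @ v) (alt s2 a2 b2 @ alt t3 b3 a3 @ v)"
    using t cd by (simp add: alt_Suc)
  also have "H a2 b2 (alt s2 b2 a2 @ alt t3 a3 b3 @ v) (alt s2 a2 b2 @ alt t3 b3 a3 @ v)
     = H c2 d2 (alt t3 a3 b3 @ v) (alt t3 b3 a3 @ v)" unfolding c2_def d2_def by (rule H_alt)
  also have "\<dots> = 1 + H a3 b3 (alt s3 b3 a3 @ v) (alt s3 a3 b3 @ v)"
    using t cd2 by (simp add: alt_Suc)
  also have "H a3 b3 (alt s3 b3 a3 @ v) (alt s3 a3 b3 @ v) = 1" using H_tail_conv assms(3) by blast
  finally show ?thesis by simp
qed


theorem theorem3:
  fixes q n :: nat and x y :: "nat list"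
  assumes "q \<ge> 2" and "n \<ge> 1"
    and "x \<in> seqs q" and "y \<in> seqs q" and "length x = n" and "length y = n"
    and "x \<noteq> y"
  shows "(hamming (Rvec x) (Rvec y) = 3 \<longleftrightarrow>
           (\<exists>u v t1 t2 a1 b1 a2 b2.
              u \<in> seqs q \<and> v \<in> seqs q \<and> t1 \<ge> 1 \<and> t2 \<ge> 1 \<and>
              a1 < q \<and> b1 < q \<and> a2 < q \<and> b2 < q \<and> a1 \<noteq> b1 \<and> a2 \<noteq> b2 \<and>
              {# alt_last t1 a1 b1, a2 #} \<noteq> {# alt_last t1 b1 a1, b2 #} \<and>
              x = u @ alt t1 a1 b1 @ alt t2 a2 b2 @ v \<and>
              y = u @ alt t1 b1 a1 @ alt t2 b2 a2 @ v))
       \<and>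
       (hamming (Rvec x) (Rvec y) = 4 \<longleftrightarrow>
          ((\<exists>u v w t1 t2 a1 b1 a2 b2.
              u \<in> seqs q \<and> v \<in> seqs q \<and> w \<in> seqs q \<and> v \<noteq> [] \<and> t1 \<ge> 1 \<and> t2 \<ge> 1 \<and>
              a1 < q \<and> b1 < q \<and> a2 < q \<and> b2 < q \<and> a1 \<noteq> b1 \<and> a2 \<noteq> b2 \<and>
              x = u @ alt t1 a1 b1 @ v @ alt t2 a2 b2 @ w \<and>
              y = u @ alt t1 b1 a1 @ v @ alt t2 b2 a2 @ w)
           \<or>
           (\<exists>u v t1 t2 t3 a1 b1 a2 b2 a3 b3.
              u \<in> seqs q \<and> v \<in> seqs q \<and> t1 \<ge> 1 \<and> t2 \<ge> 1 \<and> t3 \<ge> 1 \<and>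
              a1 < q \<and> b1 < q \<and> a2 < q \<and> b2 < q \<and> a3 < q \<and> b3 < q \<and>
              a1 \<noteq> b1 \<and> a2 \<noteq> b2 \<and> a3 \<noteq> b3 \<and>
              {# alt_last t1 a1 b1, a2 #} \<noteq> {# alt_last t1 b1 a1, b2 #} \<and>
              {# alt_last t2 a2 b2, a3 #} \<noteq> {# alt_last t2 b2 a2, b3 #} \<and>
              x = u @ alt t1 a1 b1 @ alt t2 a2 b2 @ alt t3 a3 b3 @ v \<and>
              y = u @ alt t1 b1 a1 @ alt t2 b2 a2 @ alt t3 b3 a3 @ v)))"
proof -
  let ?P3 = "\<exists>u v t1 t2 a1 b1 a2 b2.
              u \<in> seqs q \<and> v \<in> seqs q \<and> t1 \<ge> 1 \<and> t2 \<ge> 1 \<and>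
              a1 < q \<and> b1 < q \<and> a2 < q \<and> b2 < q \<and> a1 \<noteq> b1 \<and> a2 \<noteq> b2 \<and>
              {# alt_last t1 a1 b1, a2 #} \<noteq> {# alt_last t1 b1 a1, b2 #} \<and>
              x = u @ alt t1 a1 b1 @ alt t2 a2 b2 @ v \<and>
              y = u @ alt t1 b1 a1 @ alt t2 b2 a2 @ v"
  let ?PA = "\<exists>u v w t1 t2 a1 b1 a2 b2.
              u \<in> seqs q \<and> v \<in> seqs q \<and> w \<in> seqs q \<and> v \<noteq> [] \<and> t1 \<ge> 1 \<and> t2 \<ge> 1 \<and>
              a1 < q \<and> b1 < q \<and> a2 < q \<and> b2 < q \<and> a1 \<noteq> b1 \<and> a2 \<noteq> b2 \<and>
              x = u @ alt t1 a1 b1 @ v @ alt t2 a2 b2 @ w \<and>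
              y = u @ alt t1 b1 a1 @ v @ alt t2 b2 a2 @ w"
  let ?PB = "\<exists>u v t1 t2 t3 a1 b1 a2 b2 a3 b3.
              u \<in> seqs q \<and> v \<in> seqs q \<and> t1 \<ge> 1 \<and> t2 \<ge> 1 \<and> t3 \<ge> 1 \<and>
              a1 < q \<and> b1 < q \<and> a2 < q \<and> b2 < q \<and> a3 < q \<and> b3 < q \<and>
              a1 \<noteq> b1 \<and> a2 \<noteq> b2 \<and> a3 \<noteq> b3 \<and>
              {# alt_last t1 a1 b1, a2 #} \<noteq> {# alt_last t1 b1 a1, b2 #} \<and>
              {# alt_last t2 a2 b2, a3 #} \<noteq> {# alt_last t2 b2 a2, b3 #} \<and>
              x = u @ alt t1 a1 b1 @ alt t2 a2 b2 @ alt t3 a3 b3 @ v \<and>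
              y = u @ alt t1 b1 a1 @ alt t2 b2 a2 @ alt t3 b3 a3 @ v"
  have hH: "hamming (Rvec x) (Rvec y) = H 0 0 x y" by (simp add: H_def Rvec_Rv)
  have xq: "\<forall>c\<in>set x. c < q" and yq: "\<forall>c\<in>set y. c < q" using assms(3,4) by (auto simp: seqs_def)
  have lxy: "length x = length y" using assms(5,6) by simp
  obtain u a1 b1 r r' where pr: "x = u @ a1 # r" "y = u @ b1 # r'" "a1 \<noteq> b1" "length r = length r'"
    using prefix[OF lxy assms(7)] by blast
  have H0: "H 0 0 x y = 1 + H a1 b1 r r'"
    using pr H_app_same[of 0 u "a1 # r" "b1 # r'"] by (simp add: mset_neq_same)
  have b3: "?P3 \<Longrightarrow> H 0 0 x y = 3"
  proof -
    assume ?P3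
    then obtain u v t1 t2 a1 b1 a2 b2 where h: "t1 \<ge> 1" "t2 \<ge> 1" "a1 \<noteq> b1" "a2 \<noteq> b2"
      "{# alt_last t1 a1 b1, a2 #} \<noteq> {# alt_last t1 b1 a1, b2 #}"
      "x = u @ alt t1 a1 b1 @ alt t2 a2 b2 @ v" "y = u @ alt t1 b1 a1 @ alt t2 b2 a2 @ v" by blast
    show ?thesis unfolding h(6,7) by (rule back3[OF h(3,4,5,1,2)])
  qed
  have b4A: "?PA \<Longrightarrow> H 0 0 x y = 4"
  proof -
    assume ?PA
    then obtain u v w t1 t2 a1 b1 a2 b2 where h: "t1 \<ge> 1" "t2 \<ge> 1" "a1 \<noteq> b1" "a2 \<noteq> b2" "v \<noteq> []"
      "x = u @ alt t1 a1 b1 @ v @ alt t2 a2 b2 @ w" "y = u @ alt t1 b1 a1 @ v @ alt t2 b2 a2 @ w" by blast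
    show ?thesis unfolding h(6,7) by (rule back4A[OF h(3,4,5,1,2)])
  qed
  have b4B: "?PB \<Longrightarrow> H 0 0 x y = 4"
  proof -
    assume ?PB
    then obtain u v t1 t2 t3 a1 b1 a2 b2 a3 b3 where h: "t1 \<ge> 1" "t2 \<ge> 1" "t3 \<ge> 1" "a1 \<noteq> b1" "a2 \<noteq> b2" "a3 \<noteq> b3"
      "{# alt_last t1 a1 b1, a2 #} \<noteq> {# alt_last t1 b1 a1, b2 #}"
      "{# alt_last t2 a2 b2, a3 #} \<noteq> {# alt_last t2 b2 a2, b3 #}"
      "x = u @ alt t1 a1 b1 @ alt t2 a2 b2 @ alt t3 a3 b3 @ v" "y = u @ alt t1 b1 a1 @ alt t2 b2 a2 @ alt t3 b3 a3 @ v" by blast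
    show ?thesis unfolding h(9,10) by (rule back4B[OF h(4,5,6,7,8,1,2,3)])
  qed
  from step[OF pr(3) pr(4)] obtain t s s' where ts: "r = alt t b1 a1 @ s" "r' = alt t a1 b1 @ s'" and
   c: "(s = [] \<and> s' = [] \<and> H a1 b1 r r' = 1 \<or>
    (\<exists>g w w'. s = g#w \<and> s' = g#w' \<and> H a1 b1 r r' = 1 + H g g w w') \<or>
    (\<exists>a2 b2 w w'. s = a2#w \<and> s' = b2#w' \<and> a2 \<noteq> b2 \<and> {#last (a1 # alt t b1 a1), a2#} \<noteq> {#last (b1 # alt t a1 b1), b2#}
        \<and> H a1 b1 r r' = 1 + H a2 b2 w w'))" by blast
  have ls: "length s = length s'" using pr(4) ts by simp
  have f3: "H 0 0 x y = 3 \<Longrightarrow> ?P3"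
  proof -
    assume h3: "H 0 0 x y = 3"
    from c show ?P3
    proof (elim disjE exE conjE)
      assume "H a1 b1 r r' = 1" hence False using h3 H0 by simp thus ?P3 ..
    next
      fix g w w' assume g: "s = g#w" "s' = g#w'" "H a1 b1 r r' = 1 + H g g w w'"
      have "length w = length w'" using ls g by simp
      moreover have "H g g w w' = 1" using g h3 H0 by simp
      ultimately have False using H_eq_cases[of w w' g] by auto thus ?P3 ..
    next
      fix a2 b2 w w' assume g: "s = a2#w" "s' = b2#w'" "a2 \<noteq> b2"
        "{#last (a1 # alt t b1 a1), a2#} \<noteq> {#last (b1 # alt t a1 b1), b2#}"
        "H a1 b1 r r' = 1 + H a2 b2 w w'"
      have "length w = length w'" using ls g by simp
      moreover have "H a2 b2 w w' = 1" using g h3 H0 by simp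
      ultimately obtain t2 v where tv: "w = alt t2 b2 a2 @ v" "w' = alt t2 a2 b2 @ v"
        using tail[OF g(3)] by blast
      have ex: "x = u @ alt (Suc t) a1 b1 @ alt (Suc t2) a2 b2 @ v"
               "y = u @ alt (Suc t) b1 a1 @ alt (Suc t2) b2 a2 @ v"
        using pr ts g tv by (simp_all add: alt_Suc)
      have "u \<in> seqs q \<and> v \<in> seqs q \<and> Suc t \<ge> 1 \<and> Suc t2 \<ge> 1 \<and>
              a1 < q \<and> b1 < q \<and> a2 < q \<and> b2 < q \<and> a1 \<noteq> b1 \<and> a2 \<noteq> b2 \<and>
              {# alt_last (Suc t) a1 b1, a2 #} \<noteq> {# alt_last (Suc t) b1 a1, b2 #}"
        using xq yq ex g pr(3) by (auto simp: seqs_def alt_last_eq alt_Suc)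
      thus ?P3 using ex
        apply -
        apply (rule exI[of _ u], rule exI[of _ v], rule exI[of _ "Suc t"], rule exI[of _ "Suc t2"])
        apply (rule exI[of _ a1], rule exI[of _ b1], rule exI[of _ a2], rule exI[of _ b2])
        by simp
    qed
  qed
  have f4: "H 0 0 x y = 4 \<Longrightarrow> ?PA \<or> ?PB"
  proof -
    assume h4: "H 0 0 x y = 4"
    from c show ?thesis
    proof (elim disjE exE conjE)
      assume "H a1 b1 r r' = 1" hence False using h4 H0 by simp thus ?thesis ..
    next
      fix g w w' assume g: "s = g#w" "s' = g#w'" "H a1 b1 r r' = 1 + H g g w w'"
      have lw: "length w = length w'" using ls g by simp
      have h2: "H g g w w' = 2" using g h4 H0 by simp
      hence "w \<noteq> w'" using H_same[of g w] by auto
      then obtain u2 a2 b2 r2 r2' where p2: "w = u2 @ a2 # r2" "w' = u2 @ b2 # r2'" "a2 \<noteq> b2" "length r2 = length r2'"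
        using prefix[OF lw] by blast
      have "H g g w w' = 1 + H a2 b2 r2 r2'"
        using p2 H_app_same[of g u2 "a2 # r2" "b2 # r2'"] by (simp add: mset_neq_same)
      hence "H a2 b2 r2 r2' = 1" using h2 by simp
      then obtain t2 v where tv: "r2 = alt t2 b2 a2 @ v" "r2' = alt t2 a2 b2 @ v"
        using tail[OF p2(3) p2(4)] by blast
      have ex: "x = u @ alt (Suc t) a1 b1 @ (g # u2) @ alt (Suc t2) a2 b2 @ v"
               "y = u @ alt (Suc t) b1 a1 @ (g # u2) @ alt (Suc t2) b2 a2 @ v"
        using pr ts g tv p2 by (simp_all add: alt_Suc)
      have "u \<in> seqs q \<and> (g # u2) \<in> seqs q \<and> v \<in> seqs q \<and> g # u2 \<noteq> [] \<and> Suc t \<ge> 1 \<and> Suc t2 \<ge> 1 \<and>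
              a1 < q \<and> b1 < q \<and> a2 < q \<and> b2 < q \<and> a1 \<noteq> b1 \<and> a2 \<noteq> b2"
        using xq yq ex p2 pr(3) by (auto simp: seqs_def alt_Suc)
      hence pa: ?PA using ex
        apply -
        apply (rule exI[of _ u], rule exI[of _ "g # u2"], rule exI[of _ v], rule exI[of _ "Suc t"], rule exI[of _ "Suc t2"])
        apply (rule exI[of _ a1], rule exI[of _ b1], rule exI[of _ a2], rule exI[of _ b2])
        by simp
      from pa show ?thesis by (rule disjI1)
    next
      fix a2 b2 w w' assume g: "s = a2#w" "s' = b2#w'" "a2 \<noteq> b2"
        "{#last (a1 # alt t b1 a1), a2#} \<noteq> {#last (b1 # alt t a1 b1), b2#}"
        "H a1 b1 r r' = 1 + H a2 b2 w w'"
      have lw: "length w = length w'" using ls g by simp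
      have h2: "H a2 b2 w w' = 2" using g h4 H0 by simp
      from step[OF g(3) lw] obtain t2 s2 s2' where ts2: "w = alt t2 b2 a2 @ s2" "w' = alt t2 a2 b2 @ s2'" and
       c2: "(s2 = [] \<and> s2' = [] \<and> H a2 b2 w w' = 1 \<or>
        (\<exists>g2 z z'. s2 = g2#z \<and> s2' = g2#z' \<and> H a2 b2 w w' = 1 + H g2 g2 z z') \<or>
        (\<exists>a3 b3 w3 w3'. s2 = a3#w3 \<and> s2' = b3#w3' \<and> a3 \<noteq> b3 \<and> {#last (a2 # alt t2 b2 a2), a3#} \<noteq> {#last (b2 # alt t2 a2 b2), b3#}
            \<and> H a2 b2 w w' = 1 + H a3 b3 w3 w3'))" by blast
      have ls2: "length s2 = length s2'" using lw ts2 by simp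
      from c2 show ?thesis
      proof (elim disjE exE conjE)
        assume "H a2 b2 w w' = 1" hence False using h2 by simp thus ?thesis ..
      next
        fix g2 z z' assume gg: "s2 = g2#z" "s2' = g2#z'" "H a2 b2 w w' = 1 + H g2 g2 z z'"
        have "length z = length z'" using ls2 gg by simp
        moreover have "H g2 g2 z z' = 1" using gg h2 by simp
        ultimately have False using H_eq_cases[of z z' g2] by auto thus ?thesis ..
      next
        fix a3 b3 w3 w3' assume gg: "s2 = a3#w3" "s2' = b3#w3'" "a3 \<noteq> b3"
          "{#last (a2 # alt t2 b2 a2), a3#} \<noteq> {#last (b2 # alt t2 a2 b2), b3#}"
          "H a2 b2 w w' = 1 + H a3 b3 w3 w3'"
        have "length w3 = length w3'" using ls2 gg by simp
        moreover have "H a3 b3 w3 w3' = 1" using gg h2 by simp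
        ultimately obtain t3 v where tv: "w3 = alt t3 b3 a3 @ v" "w3' = alt t3 a3 b3 @ v"
          using tail[OF gg(3)] by blast
        have ex: "x = u @ alt (Suc t) a1 b1 @ alt (Suc t2) a2 b2 @ alt (Suc t3) a3 b3 @ v"
                 "y = u @ alt (Suc t) b1 a1 @ alt (Suc t2) b2 a2 @ alt (Suc t3) b3 a3 @ v"
          using pr ts g ts2 gg tv by (simp_all add: alt_Suc)
        have "u \<in> seqs q \<and> v \<in> seqs q \<and> Suc t \<ge> 1 \<and> Suc t2 \<ge> 1 \<and> Suc t3 \<ge> 1 \<and>
              a1 < q \<and> b1 < q \<and> a2 < q \<and> b2 < q \<and> a3 < q \<and> b3 < q \<and>
              a1 \<noteq> b1 \<and> a2 \<noteq> b2 \<and> a3 \<noteq> b3 \<and>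
              {# alt_last (Suc t) a1 b1, a2 #} \<noteq> {# alt_last (Suc t) b1 a1, b2 #} \<and>
              {# alt_last (Suc t2) a2 b2, a3 #} \<noteq> {# alt_last (Suc t2) b2 a2, b3 #}"
          using xq yq ex g gg pr(3) by (auto simp: seqs_def alt_last_eq alt_Suc)
        hence pb: ?PB using ex
          apply -
          apply (rule exI[of _ u], rule exI[of _ v], rule exI[of _ "Suc t"], rule exI[of _ "Suc t2"], rule exI[of _ "Suc t3"])
          apply (rule exI[of _ a1], rule exI[of _ b1], rule exI[of _ a2], rule exI[of _ b2], rule exI[of _ a3], rule exI[of _ b3])
          by simp
        from pb show ?thesis by (rule disjI2)
      qed
    qed
  qed
  have i3: "H 0 0 x y = 3 \<longleftrightarrow> ?P3"
    apply (rule iffI)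
     apply (erule f3)
    apply (erule b3)
    done
  have i4: "H 0 0 x y = 4 \<longleftrightarrow> ?PA \<or> ?PB"
    apply (rule iffI)
     apply (erule f4)
    apply (erule disjE)
     apply (erule b4A)
    apply (erule b4B)
    done
  show ?thesis unfolding hH using i3 i4 by (rule conjI)
qed

end
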